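(* Let $A=\{a_1<\cdots<a_k\}$ be a finite set of positive integers. There exists a bijection $\phi:\mathcal{BP}^{(1)}(A)\to\mathcal{BP}^{(3)}(A)$ that preserves the box-neighbor-set.
   Context: Let $\Box$ be an extra symbol. A box-permutation on $A$ is a word $w$ over $A\cup\{\Box\}$ in which each element of $A$ appears exactly once, such that: if $\Box$ does not occur then $w=a_1a_2\cdots a_k$; otherwise the (box-free) segment before the first box and the segment after the last box each have length at least one and are increasing, and every segment between two successive boxes has length at least two and is increasing. $\mathcal{BP}(A)$ is the set of box-permutations on $A$. Positions in a box-permutation $\pi=\pi_1\pi_2\cdots\pi_n$ count boxes as letters. $\mathcal{BP}^{(1)}(A)$ is the set of $\pi\in\mathcal{BP}(A)$ such that either $a_1$ is in an even position, or $\pi_1=a_1$ and $\pi_2=\Box$. $\mathcal{BP}^{(3)}(A)$ is the set of $\pi\in\mathcal{BP}(A)$ in which $a_1$ occupies an odd position other than the first. The box-neighbor-set of a box-permutation is the set of all 2-subsets $\{a,b\}$ such that $a,b$ are the two neighbors of some box. *)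

theory Defs
  imports Main
begin

text \<open>A word over A \<union> {box} is a list of type nat option; None is the box,
  Some a is the letter a. Positions are 1-based: list index i is position i+1.\<close>

fun segs :: "'a option list \<Rightarrow> 'a list list" where
  "segs [] = [[]]"
| "segs (None # w) = [] # segs w"
| "segs (Some a # w) = (case segs w of s # ss \<Rightarrow> (a # s) # ss | [] \<Rightarrow> [[a]])"

definition BP :: "nat set \<Rightarrow> nat option list set" where
  "BP A = {w. (\<forall>a\<in>A. count_list w (Some a) = 1) \<and> set w \<subseteq> insert None (Some ` A) \<and>
     (if None \<notin> set w then w = map Some (sorted_list_of_set A)
      else (let ss = segs w in
              length (hd ss) \<ge> 1 \<and> length (last ss) \<ge> 1 \<and>
              (\<forall>s\<in>set ss. sorted_wrt (<) s) \<and>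
              (\<forall>j. 0 < j \<and> j < length ss - 1 \<longrightarrow> length (ss ! j) \<ge> 2)))}"

definition BP1 :: "nat set \<Rightarrow> nat option list set" where
  "BP1 A = {w \<in> BP A.
     (\<exists>i<length w. w ! i = Some (Min A) \<and> even (i + 1))
     \<or> (length w \<ge> 2 \<and> w ! 0 = Some (Min A) \<and> w ! 1 = None)}"

definition BP3 :: "nat set \<Rightarrow> nat option list set" where
  "BP3 A = {w \<in> BP A. \<exists>i<length w. w ! i = Some (Min A) \<and> odd (i + 1) \<and> i \<noteq> 0}"

definition box_nbrs :: "nat option list \<Rightarrow> nat set set" where
  "box_nbrs w = {{a, b} | a b i. 0 < i \<and> i + 1 < length w \<and> w ! i = None \<and>
                    w ! (i - 1) = Some a \<and> w ! (i + 1) = Some b}"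

end

theory Submission
  imports Defs
begin

fun okw :: "nat option list \<Rightarrow> bool" where
  "okw [] = True"
| "okw [Some a] = True"
| "okw (Some a # Some b # r) = (a < b \<and> okw (Some b # r))"
| "okw (Some a # None # Some b # r) = ((r = [] \<or> hd r \<noteq> None) \<and> okw (Some b # r))"
| "okw [Some a, None] = False"
| "okw (Some a # None # None # r) = False"
| "okw (None # r) = False"

fun lets :: "nat option list \<Rightarrow> nat list" where
  "lets [] = []"
| "lets (None # r) = lets r"
| "lets (Some a # r) = a # lets r"

lemma lets_append[simp]: "lets (u @ v) = lets u @ lets v"
  by (induction u rule: lets.induct) auto

lemma count_lets: "count_list w (Some a) = count_list (lets w) a"
  by (induction w rule: lets.induct) auto

lemma set_lets: "set (lets w) = {a. Some a \<in> set w}"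
  by (induction w rule: lets.induct) auto

lemma distinct_count: "distinct xs \<longleftrightarrow> (\<forall>x. count_list xs x \<le> 1)"
proof (induction xs)
  case Nil then show ?case by simp
next
  case (Cons y xs)
  show ?case
  proof
    assume "distinct (y # xs)" then show "\<forall>x. count_list (y # xs) x \<le> 1"
      using Cons by (auto simp: count_list_0_iff)
  next
    assume H: "\<forall>x. count_list (y # xs) x \<le> 1"
    then have "y \<notin> set xs" using H[rule_format, of y] by (auto simp: count_list_0_iff split: if_splits)
    moreover have "\<forall>x. count_list xs x \<le> 1" using H by (metis count_list.simps(2) le_SucI le_add1 order_trans Suc_eq_plus1)
    ultimately show "distinct (y # xs)" using Cons by simp
  qed
qed

lemma wf_not_last_None: "okw w \<Longrightarrow> w \<noteq> [] \<Longrightarrow> last w \<noteq> None"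
  by (induction w rule: okw.induct) auto

lemma wf_hd: "okw w \<Longrightarrow> w \<noteq> [] \<Longrightarrow> hd w = Some (hd (lets w))"
  by (induction w rule: okw.induct) auto

lemma last_Some_lets: "last w \<noteq> None \<Longrightarrow> w \<noteq> [] \<Longrightarrow> last w = Some (last (lets w))"
proof (induction w)
  case Nil then show ?case by simp
next
  case (Cons c r)
  show ?case
  proof (cases "r = []")
    case True then show ?thesis using Cons by (cases c) auto
  next
    case False
    then have "last (c # r) = last r" by simp
    moreover have "lets r \<noteq> []"
    proof -
      obtain a where "last r = Some a" using Cons False by (cases "last r") auto
      then have "Some a \<in> set r" using False by (metis last_in_set)
      then show ?thesis using set_lets[of r] by auto
    qed
    ultimately show ?thesis using Cons False by (cases c) auto
  qed
qed

lemma wf_last: "okw w \<Longrightarrow> w \<noteq> [] \<Longrightarrow> last w = Some (last (lets w))"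
  using wf_not_last_None last_Some_lets by blast

lemma wf_lets_nonempty: "okw w \<Longrightarrow> w \<noteq> [] \<Longrightarrow> lets w \<noteq> []"
  by (induction w rule: okw.induct) auto

lemma wf_Some_iff: "okw (Some a # r) \<longleftrightarrow>
   (case r of [] \<Rightarrow> True
    | Some b # _ \<Rightarrow> a < b \<and> okw r
    | None # r' \<Rightarrow> (case r' of [] \<Rightarrow> False | None # _ \<Rightarrow> False
                   | Some b # r'' \<Rightarrow> (r'' = [] \<or> hd r'' \<noteq> None) \<and> okw r'))"
proof (cases r)
  case Nil then show ?thesis by simp
next
  case (Cons c r')
  show ?thesis
  proof (cases c)
    case None
    show ?thesis
    proof (cases r')
      case Nil then show ?thesis using Cons None by simp
    next
      case (Cons d r'')
      then show ?thesis using \<open>r = c # r'\<close> None by (cases d) auto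
    qed
  next
    case (Some b) then show ?thesis using Cons by simp
  qed
qed

lemma wf_append:
  assumes "u = [] \<or> last u \<noteq> None" "v = [] \<or> hd v \<noteq> None"
  shows "okw (u @ v) \<longleftrightarrow> okw u \<and> okw v \<and> (u = [] \<or> v = [] \<or> last (lets u) < hd (lets v))"
  using assms
proof (induction u rule: okw.induct)
  case 1 then show ?case by simp
next
  case (2 a)
  show ?case
  proof (cases v)
    case Nil then show ?thesis by simp
  next
    case (Cons c v')
    then obtain b where "c = Some b" using 2 by (cases c) auto
    then show ?thesis using Cons by auto
  qed
next
  case (3 a b r)
  have "last (Some b # r) \<noteq> None" using 3(2) by simp
  then have IH: "okw ((Some b # r) @ v) \<longleftrightarrow> okw (Some b # r) \<and> okw v \<and> (v = [] \<or> last (lets (Some b # r)) < hd (lets v))"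
    using 3 by simp
  show ?case using IH by simp
next
  case (4 a b r)
  have "last (Some b # r) \<noteq> None" using 4(2) by (cases r) auto
  then have IH: "okw ((Some b # r) @ v) \<longleftrightarrow> okw (Some b # r) \<and> okw v \<and> (v = [] \<or> last (lets (Some b # r)) < hd (lets v))"
    using 4 by simp
  have E: "(r @ v = [] \<or> hd (r @ v) \<noteq> None) \<longleftrightarrow> (r = [] \<or> hd r \<noteq> None)"
    using 4(3) by (cases r) auto
  show ?case using IH E by simp
next
  case (5 a) then show ?case by simp
next
  case (6 a r) then show ?case by simp
next
  case (7 r) then show ?case by simp
qed


lemma segs_ne: "segs w \<noteq> []"
  by (induction w rule: segs.induct) (auto split: list.splits)

lemma segs_Some: "segs (Some a # w) = (a # hd (segs w)) # tl (segs w)"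
  using segs_ne[of w] by (cases "segs w") auto

definition mid :: "nat list list \<Rightarrow> bool" where
  "mid ss = (\<forall>j. 0 < j \<and> j < length ss - 1 \<longrightarrow> 2 \<le> length (ss ! j))"

lemma mid_Cons_same: "mid (x # ss) = mid (y # ss)"
  unfolding mid_def by (metis (no_types, lifting) length_Cons nth_Cons_pos)

lemma mid_Cons2: "mid (x # y # zs) \<longleftrightarrow> (zs \<noteq> [] \<longrightarrow> 2 \<le> length y) \<and> mid (y # zs)"
proof
  assume H: "mid (x # y # zs)"
  have 1: "zs \<noteq> [] \<longrightarrow> 2 \<le> length y"
  proof
    assume "zs \<noteq> []"
    then show "2 \<le> length y" using H[unfolded mid_def, rule_format, of 1] by simp
  qed
  have 2: "mid (y # zs)" unfolding mid_def
  proof (intro allI impI)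
    fix j assume "0 < j \<and> j < length (y # zs) - 1"
    then show "2 \<le> length ((y # zs) ! j)" using H[unfolded mid_def, rule_format, of "Suc j"] by simp
  qed
  show "(zs \<noteq> [] \<longrightarrow> 2 \<le> length y) \<and> mid (y # zs)" using 1 2 by blast
next
  assume H: "(zs \<noteq> [] \<longrightarrow> 2 \<le> length y) \<and> mid (y # zs)"
  show "mid (x # y # zs)" unfolding mid_def
  proof (intro allI impI)
    fix j assume j: "0 < j \<and> j < length (x # y # zs) - 1"
    show "2 \<le> length ((x # y # zs) ! j)"
    proof (cases "j = 1")
      case True then show ?thesis using H j by auto
    next
      case False
      then obtain k where k: "j = Suc k" "0 < k" using j by (cases j) auto
      then show ?thesis using H[THEN conjunct2, unfolded mid_def, rule_format, of k] j by simp
    qed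
  qed
qed

definition sc :: "nat list list \<Rightarrow> bool" where
  "sc ss = (1 \<le> length (hd ss) \<and> 1 \<le> length (last ss) \<and> (\<forall>s\<in>set ss. sorted_wrt (<) s) \<and> mid ss)"

lemma sc_case3: "sc ((a # b # s0) # ss) \<longleftrightarrow> a < b \<and> sc ((b # s0) # ss)"
proof -
  have "sorted_wrt (<) (a # b # s0) \<longleftrightarrow> a < b \<and> sorted_wrt (<) (b # s0)"
    by (rule sorted_wrt2) (auto simp: transp_def)
  moreover have "mid ((a # b # s0) # ss) = mid ((b # s0) # ss)" by (rule mid_Cons_same)
  ultimately show ?thesis unfolding sc_def by (cases ss) auto
qed

lemma sc_case4: "sc ([a] # (b # s0) # ss) \<longleftrightarrow> (ss \<noteq> [] \<longrightarrow> s0 \<noteq> []) \<and> sc ((b # s0) # ss)"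
  unfolding sc_def using mid_Cons2[of "[a]" "b # s0" ss] by (cases s0) auto

lemma sc_okw: "w \<noteq> [] \<Longrightarrow> sc (segs w) \<longleftrightarrow> okw w"
proof (induction w rule: okw.induct)
  case 1 then show ?case by simp
next
  case (2 a) then show ?case by (simp add: sc_def mid_def)
next
  case (3 a b r)
  have "segs (Some a # Some b # r) = (a # b # hd (segs r)) # tl (segs r)"
       "segs (Some b # r) = (b # hd (segs r)) # tl (segs r)" by (simp_all only: segs_Some list.sel)
  then show ?case using 3 sc_case3 by simp
next
  case (4 a b r)
  have e1: "segs (Some a # None # Some b # r) = [a] # (b # hd (segs r)) # tl (segs r)"
    by (simp only: segs_Some segs.simps(2) list.sel)
  have e2: "segs (Some b # r) = (b # hd (segs r)) # tl (segs r)" by (simp only: segs_Some)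
  have e3: "(tl (segs r) \<noteq> [] \<longrightarrow> hd (segs r) \<noteq> []) \<longleftrightarrow> (r = [] \<or> hd r \<noteq> None)"
  proof (cases r)
    case Nil then show ?thesis by simp
  next
    case (Cons c r')
    then show ?thesis using segs_ne[of r'] by (cases c) (auto simp: segs_Some simp del: segs.simps(3))
  qed
  show ?case using 4 e1 e2 e3 sc_case4 by simp
next
  case (5 a) then show ?case by (simp add: sc_def)
next
  case (6 a r)
  have "segs (Some a # None # None # r) = [a] # [] # segs r" by (simp only: segs_Some segs.simps(2) list.sel)
  then show ?case using segs_ne[of r] mid_Cons2[of "[a]" "[]" "segs r"] by (simp add: sc_def)
next
  case (7 r) then show ?case by (simp add: sc_def)
qed

lemma noNone_map: "None \<notin> set w \<Longrightarrow> w = map Some (lets w)"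
  by (induction w rule: lets.induct) auto

lemma okw_map: "okw (map Some xs) \<longleftrightarrow> sorted_wrt (<) xs"
proof (induction xs)
  case Nil then show ?case by simp
next
  case (Cons x xs)
  then show ?case
  proof (cases xs)
    case Nil then show ?thesis by simp
  next
    case (Cons y ys)
    have "sorted_wrt (<) (x # y # ys) \<longleftrightarrow> x < y \<and> sorted_wrt (<) (y # ys)"
      by (rule sorted_wrt2) (auto simp: transp_def)
    then show ?thesis using Cons.IH Cons by simp
  qed
qed

lemma letters_iff:
  "((\<forall>a\<in>A. count_list w (Some a) = 1) \<and> set w \<subseteq> insert None (Some ` A)) \<longleftrightarrow>
   distinct (lets w) \<and> set (lets w) = A"
proof -
  have S: "set w \<subseteq> insert None (Some ` A) \<longleftrightarrow> set (lets w) \<subseteq> A"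
  proof
    assume "set w \<subseteq> insert None (Some ` A)" then show "set (lets w) \<subseteq> A" unfolding set_lets by auto
  next
    assume H: "set (lets w) \<subseteq> A" show "set w \<subseteq> insert None (Some ` A)"
    proof
      fix x assume x: "x \<in> set w" show "x \<in> insert None (Some ` A)"
      proof (cases x)
        case None then show ?thesis by simp
      next
        case (Some a)
        then have "a \<in> set (lets w)" using x unfolding set_lets by simp
        then show ?thesis using H Some by blast
      qed
    qed
  qed
  show ?thesis unfolding S count_lets
  proof
    assume H: "(\<forall>a\<in>A. count_list (lets w) a = 1) \<and> set (lets w) \<subseteq> A"
    have "\<forall>x. count_list (lets w) x \<le> 1"
    proof
      fix x show "count_list (lets w) x \<le> 1"
      proof (cases "x \<in> A")
        case True then show ?thesis using H by simp
      next
        case False then have "x \<notin> set (lets w)" using H by blast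
        then show ?thesis by simp
      qed
    qed
    then have "distinct (lets w)" using distinct_count[THEN iffD2] by blast
    moreover have "A \<subseteq> set (lets w)"
    proof
      fix a assume "a \<in> A" then have "count_list (lets w) a \<noteq> 0" using H by simp
      then show "a \<in> set (lets w)" using count_list_0_iff by metis
    qed
    ultimately show "distinct (lets w) \<and> set (lets w) = A" using H by blast
  next
    assume H: "distinct (lets w) \<and> set (lets w) = A"
    have "\<forall>a\<in>A. count_list (lets w) a = 1"
    proof
      fix a assume "a \<in> A"
      then have "count_list (lets w) a \<noteq> 0" using H count_list_0_iff by metis
      moreover have "count_list (lets w) a \<le> 1" using H distinct_count[THEN iffD1, rule_format, of "lets w" a] by blast
      ultimately show "count_list (lets w) a = 1" by simp
    qed
    then show "(\<forall>a\<in>A. count_list (lets w) a = 1) \<and> set (lets w) \<subseteq> A" using H by blast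
  qed
qed

lemma BP_iff:
  assumes "finite A"
  shows "w \<in> BP A \<longleftrightarrow> okw w \<and> distinct (lets w) \<and> set (lets w) = A"
proof -
  have L: "((\<forall>a\<in>A. count_list w (Some a) = 1) \<and> set w \<subseteq> insert None (Some ` A)) \<longleftrightarrow>
   distinct (lets w) \<and> set (lets w) = A" by (rule letters_iff)
  show ?thesis
  proof (cases "None \<in> set w")
    case True
    then have ne: "w \<noteq> []" by auto
    have "w \<in> BP A \<longleftrightarrow> ((\<forall>a\<in>A. count_list w (Some a) = 1) \<and> set w \<subseteq> insert None (Some ` A)) \<and> sc (segs w)"
      unfolding BP_def sc_def mid_def using True by (auto simp: Let_def)
    then show ?thesis using L sc_okw[OF ne] by blast
  next
    case False
    then have wm: "w = map Some (lets w)" by (rule noNone_map)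
    have "w \<in> BP A \<longleftrightarrow> ((\<forall>a\<in>A. count_list w (Some a) = 1) \<and> set w \<subseteq> insert None (Some ` A)) \<and> w = map Some (sorted_list_of_set A)"
      unfolding BP_def using False by auto
    also have "\<dots> \<longleftrightarrow> distinct (lets w) \<and> set (lets w) = A \<and> lets w = sorted_list_of_set A"
    proof -
      have "w = map Some (sorted_list_of_set A) \<longleftrightarrow> lets w = sorted_list_of_set A"
        using wm inj_map_eq_map[of Some "lets w" "sorted_list_of_set A"] by (metis inj_Some)
      then show ?thesis using L by blast
    qed
    also have "\<dots> \<longleftrightarrow> distinct (lets w) \<and> set (lets w) = A \<and> sorted_wrt (<) (lets w)"
      using sorted_list_of_set_unique[OF assms, of "lets w"] distinct_card[of "lets w"] by auto
    also have "\<dots> \<longleftrightarrow> okw w \<and> distinct (lets w) \<and> set (lets w) = A"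
      using okw_map[of "lets w"] wm by auto
    finally show ?thesis .
  qed
qed


lemma box_nbrs_iff: "X \<in> box_nbrs w \<longleftrightarrow> (\<exists>a b i. X = {a, b} \<and> 0 < i \<and> i + 1 < length w \<and> w ! i = None \<and>
                    w ! (i - 1) = Some a \<and> w ! (i + 1) = Some b)"
  unfolding box_nbrs_def by blast

definition loc :: "nat option \<Rightarrow> nat option list \<Rightarrow> nat set set" where
  "loc c r = (case c of Some a \<Rightarrow> (case r of None # Some b # _ \<Rightarrow> {{a, b}} | _ \<Rightarrow> {}) | None \<Rightarrow> {})"

lemma bn_Nil[simp]: "box_nbrs [] = {}"
  unfolding box_nbrs_def by simp

lemma bn_Cons: "box_nbrs (c # r) = loc c r \<union> box_nbrs r"
proof (intro set_eqI iffI)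
  fix X assume "X \<in> box_nbrs (c # r)"
  then obtain a b i where H: "X = {a, b}" "0 < i" "i + 1 < length (c # r)" "(c # r) ! i = None"
    "(c # r) ! (i - 1) = Some a" "(c # r) ! (i + 1) = Some b" unfolding box_nbrs_iff by blast
  show "X \<in> loc c r \<union> box_nbrs r"
  proof (cases "i = 1")
    case True
    then obtain r' where r: "r = None # Some b # r'" using H
      by (cases r; cases "tl r") auto
    have "c = Some a" using H True by simp
    then show ?thesis using r H(1) unfolding loc_def by simp
  next
    case False
    then obtain j where j: "i = Suc j" "0 < j" using H(2) by (cases i) auto
    have "X \<in> box_nbrs r" unfolding box_nbrs_iff
      using H j by (intro exI[of _ a] exI[of _ b] exI[of _ j]) (auto simp: nth_Cons')
    then show ?thesis by blast
  qed
next
  fix X assume "X \<in> loc c r \<union> box_nbrs r"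
  then show "X \<in> box_nbrs (c # r)"
  proof
    assume X: "X \<in> loc c r"
    then obtain a b r' where "c = Some a" "r = None # Some b # r'" "X = {a, b}"
      unfolding loc_def by (auto split: option.splits list.splits)
    then show ?thesis unfolding box_nbrs_iff
      by (intro exI[of _ a] exI[of _ b] exI[of _ 1]) auto
  next
    assume "X \<in> box_nbrs r"
    then obtain a b i where H: "X = {a, b}" "0 < i" "i + 1 < length r" "r ! i = None"
      "r ! (i - 1) = Some a" "r ! (i + 1) = Some b" unfolding box_nbrs_iff by blast
    then show ?thesis unfolding box_nbrs_iff
      by (intro exI[of _ a] exI[of _ b] exI[of _ "Suc i"]) (auto simp: nth_Cons')
  qed
qed

lemma loc_app:
  assumes "u = [] \<or> last (c # u) \<noteq> None" "v = [] \<or> hd v \<noteq> None"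
  shows "loc c (u @ v) = loc c u"
proof (cases u)
  case Nil
  then show ?thesis using assms(2) unfolding loc_def by (cases v) (auto split: option.splits list.splits)
next
  case (Cons d u')
  show ?thesis
  proof (cases u')
    case Nil
    then have "d \<noteq> None" using assms(1) Cons by simp
    then show ?thesis using Cons Nil unfolding loc_def by (auto split: option.splits list.splits)
  next
    case (Cons e u'')
    then have u: "u = d # e # u''" using \<open>u = d # u'\<close> by simp
    show ?thesis unfolding u loc_def by (cases c; cases d; cases e) auto
  qed
qed

lemma bn_append:
  assumes "u = [] \<or> last u \<noteq> None" "v = [] \<or> hd v \<noteq> None"
  shows "box_nbrs (u @ v) = box_nbrs u \<union> box_nbrs v"
  using assms(1)
proof (induction u)
  case Nil then show ?case by simp
next
  case (Cons c u)
  have IH: "box_nbrs (u @ v) = box_nbrs u \<union> box_nbrs v"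
    using Cons by (cases u) auto
  have "loc c (u @ v) = loc c u" using loc_app[of u c v] Cons.prems assms(2) by auto
  then show ?case using IH by (simp add: bn_Cons Un_assoc)
qed

lemma bn_sub: "X \<in> box_nbrs w \<Longrightarrow> X \<subseteq> set (lets w)"
proof -
  assume "X \<in> box_nbrs w"
  then obtain a b i where H: "X = {a, b}" "0 < i" "i + 1 < length w" "w ! i = None"
    "w ! (i - 1) = Some a" "w ! (i + 1) = Some b" unfolding box_nbrs_iff by blast
  have "Some a \<in> set w" using H by (metis less_imp_diff_less nth_mem add_lessD1)
  moreover have "Some b \<in> set w" using H by (metis nth_mem)
  ultimately show ?thesis using H(1) unfolding set_lets by auto
qed

lemma bn_triple: "box_nbrs [Some z, None, Some t] = {{z, t}}"
  by (simp add: bn_Cons loc_def)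

lemma bn_single: "box_nbrs [Some t] = {}"
  by (simp add: bn_Cons loc_def)

lemma okw_snoc_cases:
  "okw u \<Longrightarrow> u \<noteq> [] \<Longrightarrow>
   (\<exists>u' t. u = u' @ [Some t] \<and> (u' = [] \<or> last u' \<noteq> None)) \<or>
   (\<exists>u' z t. u = u' @ [Some z, None, Some t] \<and> (u' = [] \<or> last u' \<noteq> None))"
proof (induction u rule: okw.induct)
  case 1 then show ?case by simp
next
  case (2 a) then show ?case by (intro disjI1 exI[of _ "[]"]) auto
next
  case (3 a b r)
  then have "okw (Some b # r)" by simp
  then have IH: "(\<exists>u' t. Some b # r = u' @ [Some t] \<and> (u' = [] \<or> last u' \<noteq> None)) \<or>
   (\<exists>u' z t. Some b # r = u' @ [Some z, None, Some t] \<and> (u' = [] \<or> last u' \<noteq> None))" using 3 by simp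
  then show ?case
  proof
    assume "\<exists>u' t. Some b # r = u' @ [Some t] \<and> (u' = [] \<or> last u' \<noteq> None)"
    then obtain u' t where "Some b # r = u' @ [Some t]" "u' = [] \<or> last u' \<noteq> None" by blast
    then show ?case by (intro disjI1 exI[of _ "Some a # u'"] exI[of _ t]) auto
  next
    assume "\<exists>u' z t. Some b # r = u' @ [Some z, None, Some t] \<and> (u' = [] \<or> last u' \<noteq> None)"
    then obtain u' z t where "Some b # r = u' @ [Some z, None, Some t]" "u' = [] \<or> last u' \<noteq> None" by blast
    then show ?case by (intro disjI2 exI[of _ "Some a # u'"] exI[of _ z] exI[of _ t]) auto
  qed
next
  case (4 a b r)
  then have ok: "okw (Some b # r)" and hr: "r = [] \<or> hd r \<noteq> None" by simp_all
  then have IH: "(\<exists>u' t. Some b # r = u' @ [Some t] \<and> (u' = [] \<or> last u' \<noteq> None)) \<or>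
   (\<exists>u' z t. Some b # r = u' @ [Some z, None, Some t] \<and> (u' = [] \<or> last u' \<noteq> None))" using 4 by simp
  then show ?case
  proof
    assume "\<exists>u' t. Some b # r = u' @ [Some t] \<and> (u' = [] \<or> last u' \<noteq> None)"
    then obtain u' t where e: "Some b # r = u' @ [Some t]" "u' = [] \<or> last u' \<noteq> None" by blast
    show ?case
    proof (cases "u' = []")
      case True
      then show ?thesis using e by (intro disjI2 exI[of _ "[]"] exI[of _ a] exI[of _ t]) auto
    next
      case False
      then show ?thesis using e by (intro disjI1 exI[of _ "Some a # None # u'"] exI[of _ t]) auto
    qed
  next
    assume "\<exists>u' z t. Some b # r = u' @ [Some z, None, Some t] \<and> (u' = [] \<or> last u' \<noteq> None)"
    then obtain u' z t where e: "Some b # r = u' @ [Some z, None, Some t]" "u' = [] \<or> last u' \<noteq> None" by blast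
    have "u' \<noteq> []" using e hr by auto
    then show ?case using e by (intro disjI2 exI[of _ "Some a # None # u'"] exI[of _ z] exI[of _ t]) auto
  qed
next
  case (5 a) then show ?case by simp
next
  case (6 a r) then show ?case by simp
next
  case (7 r) then show ?case by simp
qed

lemma okw_cons_cases:
  "okw w \<Longrightarrow> w \<noteq> [] \<Longrightarrow>
   (\<exists>t w'. w = Some t # w' \<and> (w' = [] \<or> hd w' \<noteq> None)) \<or>
   (\<exists>t z w'. w = Some t # None # Some z # w' \<and> (w' = [] \<or> hd w' \<noteq> None))"
  by (induction w rule: okw.induct) auto


lemma okw_last_ne: "okw u \<Longrightarrow> u = [] \<or> last u \<noteq> None"
  using wf_not_last_None by blast

lemma okw_hd_ne: "okw w \<Longrightarrow> w = [] \<or> hd w \<noteq> None"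
  using wf_hd by fastforce

lemma okw_snoc1: "u = [] \<or> last u \<noteq> None \<Longrightarrow> okw (u @ [Some t]) \<longleftrightarrow> okw u \<and> (u = [] \<or> last (lets u) < t)"
  using wf_append[of u "[Some t]"] by simp

lemma okw_snoc3: "u = [] \<or> last u \<noteq> None \<Longrightarrow>
   okw (u @ [Some z, None, Some t]) \<longleftrightarrow> okw u \<and> (u = [] \<or> last (lets u) < z)"
  using wf_append[of u "[Some z, None, Some t]"] by simp

lemma okw_cons1: "w = [] \<or> hd w \<noteq> None \<Longrightarrow> okw (Some t # w) \<longleftrightarrow> okw w \<and> (w = [] \<or> t < hd (lets w))"
  using wf_append[of "[Some t]" w] by simp

lemma okw_cons3: "w = [] \<or> hd w \<noteq> None \<Longrightarrow>
   okw (Some t # None # Some z # w) \<longleftrightarrow> okw w \<and> (w = [] \<or> z < hd (lets w))"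
  using okw_cons1[of w z] by simp

lemma bn_snoc1: "u = [] \<or> last u \<noteq> None \<Longrightarrow> box_nbrs (u @ [Some t]) = box_nbrs u"
  using bn_append[of u "[Some t]"] bn_single by simp

lemma bn_snoc3: "u = [] \<or> last u \<noteq> None \<Longrightarrow> box_nbrs (u @ [Some z, None, Some t]) = insert {z, t} (box_nbrs u)"
  using bn_append[of u "[Some z, None, Some t]"] bn_triple by simp

lemma bn_cons1: "w = [] \<or> hd w \<noteq> None \<Longrightarrow> box_nbrs (Some t # w) = box_nbrs w"
  using bn_append[of "[Some t]" w] bn_single by simp

lemma bn_cons3: "w = [] \<or> hd w \<noteq> None \<Longrightarrow> box_nbrs (Some t # None # Some z # w) = insert {t, z} (box_nbrs w)"
  using bn_append[of "[Some t, None, Some z]" w] bn_triple by simp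

lemma okw_length: "okw w \<Longrightarrow> length w \<le> 2 * length (lets w)"
  by (induction w rule: okw.induct) auto

lemma set_w_sub: "set w \<subseteq> insert None (Some ` set (lets w))"
  by (induction w rule: lets.induct) auto

definition Wd :: "nat set \<Rightarrow> nat set set \<Rightarrow> nat option list set" where
  "Wd V P = {w. okw w \<and> distinct (lets w) \<and> set (lets w) = V \<and> box_nbrs w = P}"

definition Sp :: "nat set \<Rightarrow> nat set set \<Rightarrow> nat \<Rightarrow> (nat option list \<times> nat option list) set" where
  "Sp V P t = {(u, v). okw u \<and> okw v \<and> distinct (lets u @ lets v) \<and> set (lets u @ lets v) = V \<and>
                box_nbrs u \<union> box_nbrs v = P \<and> (u = [] \<or> last (lets u) < t)}"

definition R :: "nat set \<Rightarrow> nat set set \<Rightarrow> nat \<Rightarrow> nat option list set" where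
  "R V P t = {w \<in> Wd V P. w = [] \<or> t \<le> hd (lets w)}"

definition Wall :: "nat set \<Rightarrow> nat option list set" where
  "Wall V = {w. set w \<subseteq> insert None (Some ` V) \<and> length w \<le> 2 * card V}"

lemma finite_Wall: "finite V \<Longrightarrow> finite (Wall V)"
  unfolding Wall_def by (rule finite_lists_length_le) auto

lemma in_Wall:
  assumes "finite V" "okw w" "distinct (lets w)" "set (lets w) \<subseteq> V"
  shows "w \<in> Wall V"
proof -
  have "length (lets w) \<le> card V"
    using assms distinct_card[of "lets w"] card_mono by metis
  then have "length w \<le> 2 * card V" using okw_length[OF assms(2)] by linarith
  moreover have "set w \<subseteq> insert None (Some ` V)" using set_w_sub[of w] assms(4) by blast
  ultimately show ?thesis unfolding Wall_def by blast
qed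

lemma finite_Wd: "finite V \<Longrightarrow> finite (Wd V P)"
  by (rule finite_subset[OF _ finite_Wall[of V]]) (auto simp: Wd_def intro: in_Wall)

lemma finite_R: "finite V \<Longrightarrow> finite (R V P t)"
  unfolding R_def using finite_Wd by auto

lemma finite_Sp: "finite V \<Longrightarrow> finite (Sp V P t)"
proof (rule finite_subset[OF _ finite_cartesian_product[OF finite_Wall[of V] finite_Wall[of V]]])
  assume fV: "finite V"
  show "Sp V P t \<subseteq> Wall V \<times> Wall V"
  proof
    fix p assume "p \<in> Sp V P t"
    then obtain u v where p: "p = (u, v)" "okw u" "okw v" "distinct (lets u @ lets v)" "set (lets u @ lets v) = V"
      unfolding Sp_def by blast
    then have "u \<in> Wall V" "v \<in> Wall V" using fV by (auto intro!: in_Wall)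
    then show "p \<in> Wall V \<times> Wall V" using p by simp
  qed
qed


lemma E_b:
  assumes tV: "t \<in> V" and np: "\<not> (\<exists>z. z \<noteq> t \<and> {z, t} \<in> P)"
  shows "{p \<in> Sp V P (Suc t). fst p \<noteq> [] \<and> last (lets (fst p)) = t} =
         (\<lambda>(u, v). (u @ [Some t], v)) ` Sp (V - {t}) P t"
proof (intro set_eqI iffI)
  fix p assume "p \<in> {p \<in> Sp V P (Suc t). fst p \<noteq> [] \<and> last (lets (fst p)) = t}"
  then obtain u v where p: "p = (u, v)" and ok: "okw u" "okw v" and d: "distinct (lets u @ lets v)"
    and sV: "set (lets u @ lets v) = V" and bP: "box_nbrs u \<union> box_nbrs v = P"
    and ne: "u \<noteq> []" and lt: "last (lets u) = t"
    unfolding Sp_def by auto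
  from okw_snoc_cases[OF ok(1) ne]
  show "p \<in> (\<lambda>(u, v). (u @ [Some t], v)) ` Sp (V - {t}) P t"
  proof
    assume "\<exists>u' z t. u = u' @ [Some z, None, Some t] \<and> (u' = [] \<or> last u' \<noteq> None)"
    then obtain u0 z t' where u: "u = u0 @ [Some z, None, Some t']" and l0: "u0 = [] \<or> last u0 \<noteq> None" by blast
    have "t' = t" using lt u by simp
    moreover have "{z, t'} \<in> P" using bP bn_snoc3[OF l0] u by auto
    moreover have "z \<noteq> t'" using d u by auto
    ultimately show ?thesis using np by blast
  next
    assume "\<exists>u' t. u = u' @ [Some t] \<and> (u' = [] \<or> last u' \<noteq> None)"
    then obtain u0 t' where u: "u = u0 @ [Some t']" and l0: "u0 = [] \<or> last u0 \<noteq> None" by blast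
    have tt: "t' = t" using lt u by simp
    have "okw u0 \<and> (u0 = [] \<or> last (lets u0) < t)" using ok(1) okw_snoc1[OF l0] u tt by simp
    moreover have "distinct (lets u0 @ lets v)" "t \<notin> set (lets u0 @ lets v)" using d u tt by auto
    moreover have "set (lets u0 @ lets v) = V - {t}" using sV u tt \<open>t \<notin> set (lets u0 @ lets v)\<close> by auto
    moreover have "box_nbrs u0 \<union> box_nbrs v = P" using bP bn_snoc1[OF l0] u by simp
    ultimately have "(u0, v) \<in> Sp (V - {t}) P t" unfolding Sp_def using ok(2) by auto
    then show ?thesis using p u tt by force
  qed
next
  fix p assume "p \<in> (\<lambda>(u, v). (u @ [Some t], v)) ` Sp (V - {t}) P t"
  then obtain u0 v where p: "p = (u0 @ [Some t], v)" and ok: "okw u0" "okw v" and d: "distinct (lets u0 @ lets v)"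
    and sV: "set (lets u0 @ lets v) = V - {t}" and bP: "box_nbrs u0 \<union> box_nbrs v = P"
    and lk: "u0 = [] \<or> last (lets u0) < t"
    unfolding Sp_def by auto
  have l0: "u0 = [] \<or> last u0 \<noteq> None" using okw_last_ne[OF ok(1)] .
  have "okw (u0 @ [Some t])" using okw_snoc1[OF l0] ok lk by simp
  moreover have "t \<notin> set (lets u0 @ lets v)" using sV by auto
  then have "distinct (lets (u0 @ [Some t]) @ lets v)" using d by auto
  moreover have "set (lets (u0 @ [Some t]) @ lets v) = V" using sV tV by auto
  moreover have "box_nbrs (u0 @ [Some t]) \<union> box_nbrs v = P" using bn_snoc1[OF l0] bP by simp
  ultimately show "p \<in> {p \<in> Sp V P (Suc t). fst p \<noteq> [] \<and> last (lets (fst p)) = t}"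
    unfolding Sp_def using p ok by auto
qed

lemma E_c:
  assumes zt: "z \<noteq> t" and zP: "{z, t} \<in> P" and zV: "z \<in> V" and tV: "t \<in> V"
  shows "{p \<in> Sp V P (Suc t). fst p \<noteq> [] \<and> last (lets (fst p)) = t} =
         (\<lambda>(u, v). (u @ [Some z, None, Some t], v)) ` Sp (V - {z, t}) (P - {{z, t}}) z"
proof (intro set_eqI iffI)
  fix p assume "p \<in> {p \<in> Sp V P (Suc t). fst p \<noteq> [] \<and> last (lets (fst p)) = t}"
  then obtain u v where p: "p = (u, v)" and ok: "okw u" "okw v" and d: "distinct (lets u @ lets v)"
    and sV: "set (lets u @ lets v) = V" and bP: "box_nbrs u \<union> box_nbrs v = P"
    and ne: "u \<noteq> []" and lt: "last (lets u) = t"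
    unfolding Sp_def by auto
  have tnv: "t \<notin> set (lets v)" using d lt ne ok(1) wf_lets_nonempty
    by (metis disjoint_iff distinct_append last_in_set)
  have zt_u: "{z, t} \<notin> box_nbrs v" using bn_sub[of "{z, t}" v] tnv by auto
  from okw_snoc_cases[OF ok(1) ne]
  show "p \<in> (\<lambda>(u, v). (u @ [Some z, None, Some t], v)) ` Sp (V - {z, t}) (P - {{z, t}}) z"
  proof
    assume "\<exists>u' t. u = u' @ [Some t] \<and> (u' = [] \<or> last u' \<noteq> None)"
    then obtain u0 t' where u: "u = u0 @ [Some t']" and l0: "u0 = [] \<or> last u0 \<noteq> None" by blast
    have tt: "t' = t" using lt u by simp
    have "t \<notin> set (lets u0)" using d u tt by auto
    then have "{z, t} \<notin> box_nbrs u0" using bn_sub[of "{z, t}" u0] by auto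
    moreover have "box_nbrs u = box_nbrs u0" using bn_snoc1[OF l0] u by simp
    ultimately have False using zP bP zt_u by auto
    then show ?thesis ..
  next
    assume "\<exists>u' z t. u = u' @ [Some z, None, Some t] \<and> (u' = [] \<or> last u' \<noteq> None)"
    then obtain u0 z' t' where u: "u = u0 @ [Some z', None, Some t']" and l0: "u0 = [] \<or> last u0 \<noteq> None" by blast
    have tt: "t' = t" using lt u by simp
    have tnu0: "t \<notin> set (lets u0)" using d u tt by auto
    then have "{z, t} \<notin> box_nbrs u0" using bn_sub[of "{z, t}" u0] by auto
    moreover have bu: "box_nbrs u = insert {z', t} (box_nbrs u0)" using bn_snoc3[OF l0] u tt by simp
    ultimately have "{z, t} = {z', t}" using zP bP zt_u by auto
    then have zz: "z' = z" using zt by (metis doubleton_eq_iff)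
    have "okw u0 \<and> (u0 = [] \<or> last (lets u0) < z)" using ok(1) okw_snoc3[OF l0] u tt zz by simp
    moreover have dd: "distinct (lets u0 @ lets v)" "z \<notin> set (lets u0 @ lets v)" "t \<notin> set (lets u0 @ lets v)"
      using d u tt zz by auto
    moreover have "set (lets u0 @ lets v) = V - {z, t}" using sV u tt zz dd(2,3) by auto
    moreover have "box_nbrs u0 \<union> box_nbrs v = P - {{z, t}}"
    proof -
      have "{z, t} \<notin> box_nbrs u0" using bn_sub[of "{z, t}" u0] dd by auto
      moreover have "{z, t} \<notin> box_nbrs v" using zt_u .
      ultimately show ?thesis using bP bu zz by auto
    qed
    ultimately have "(u0, v) \<in> Sp (V - {z, t}) (P - {{z, t}}) z" unfolding Sp_def using ok(2) by auto
    then show ?thesis using p u tt zz by force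
  qed
next
  fix p assume "p \<in> (\<lambda>(u, v). (u @ [Some z, None, Some t], v)) ` Sp (V - {z, t}) (P - {{z, t}}) z"
  then obtain u0 v where p: "p = (u0 @ [Some z, None, Some t], v)" and ok: "okw u0" "okw v"
    and d: "distinct (lets u0 @ lets v)"
    and sV: "set (lets u0 @ lets v) = V - {z, t}" and bP: "box_nbrs u0 \<union> box_nbrs v = P - {{z, t}}"
    and lk: "u0 = [] \<or> last (lets u0) < z"
    unfolding Sp_def by auto
  have l0: "u0 = [] \<or> last u0 \<noteq> None" using okw_last_ne[OF ok(1)] .
  have "okw (u0 @ [Some z, None, Some t])" using okw_snoc3[OF l0] ok lk by simp
  moreover have "z \<notin> set (lets u0 @ lets v)" "t \<notin> set (lets u0 @ lets v)" using sV by auto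
  then have "distinct (lets (u0 @ [Some z, None, Some t]) @ lets v)" using d zt by auto
  moreover have "set (lets (u0 @ [Some z, None, Some t]) @ lets v) = V" using sV tV zV by auto
  moreover have "box_nbrs (u0 @ [Some z, None, Some t]) \<union> box_nbrs v = P" using bn_snoc3[OF l0] bP zP by auto
  ultimately show "p \<in> {p \<in> Sp V P (Suc t). fst p \<noteq> [] \<and> last (lets (fst p)) = t}"
    unfolding Sp_def using p ok by auto
qed


lemma hd_lets_in: "okw w \<Longrightarrow> w \<noteq> [] \<Longrightarrow> hd (lets w) \<in> set (lets w)"
  using wf_lets_nonempty by auto

lemma F_b:
  assumes tV: "t \<in> V" and np: "\<not> (\<exists>z. z \<noteq> t \<and> {z, t} \<in> P)"
  shows "{w \<in> Wd V P. w \<noteq> [] \<and> hd (lets w) = t} = (\<lambda>w. Some t # w) ` R (V - {t}) P t"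
proof (intro set_eqI iffI)
  fix w assume "w \<in> {w \<in> Wd V P. w \<noteq> [] \<and> hd (lets w) = t}"
  then have ok: "okw w" and d: "distinct (lets w)" and sV: "set (lets w) = V" and bP: "box_nbrs w = P"
    and ne: "w \<noteq> []" and ht: "hd (lets w) = t" unfolding Wd_def by auto
  from okw_cons_cases[OF ok ne]
  show "w \<in> (\<lambda>w. Some t # w) ` R (V - {t}) P t"
  proof
    assume "\<exists>t z w'. w = Some t # None # Some z # w' \<and> (w' = [] \<or> hd w' \<noteq> None)"
    then obtain t' z w' where w: "w = Some t' # None # Some z # w'" and h: "w' = [] \<or> hd w' \<noteq> None" by blast
    have "t' = t" using ht w by simp
    moreover have "{t', z} \<in> P" using bP bn_cons3[OF h] w by auto
    moreover have "z \<noteq> t'" using d w by auto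
    ultimately show ?thesis using np by (metis insert_commute)
  next
    assume "\<exists>t w'. w = Some t # w' \<and> (w' = [] \<or> hd w' \<noteq> None)"
    then obtain t' w' where w: "w = Some t' # w'" and h: "w' = [] \<or> hd w' \<noteq> None" by blast
    have tt: "t' = t" using ht w by simp
    have o: "okw w' \<and> (w' = [] \<or> t < hd (lets w'))" using ok okw_cons1[OF h] w tt by simp
    have "w' \<in> R (V - {t}) P t" unfolding R_def Wd_def
      using o d sV bP bn_cons1[OF h] w tt by auto
    then show ?thesis using w tt by blast
  qed
next
  fix w assume "w \<in> (\<lambda>w. Some t # w) ` R (V - {t}) P t"
  then obtain w' where w: "w = Some t # w'" and ok: "okw w'" and d: "distinct (lets w')"
    and sV: "set (lets w') = V - {t}" and bP: "box_nbrs w' = P" and lk: "w' = [] \<or> t \<le> hd (lets w')"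
    unfolding R_def Wd_def by auto
  have h: "w' = [] \<or> hd w' \<noteq> None" using okw_hd_ne[OF ok] .
  have "w' = [] \<or> t < hd (lets w')" using lk hd_lets_in[OF ok] sV by (metis Diff_iff insertI1 le_neq_implies_less)
  then have "okw w" using okw_cons1[OF h] ok w by simp
  then show "w \<in> {w \<in> Wd V P. w \<noteq> [] \<and> hd (lets w) = t}"
    unfolding Wd_def using w d sV bP bn_cons1[OF h] tV by auto
qed

lemma F_c:
  assumes zt: "z \<noteq> t" and zP: "{z, t} \<in> P" and zV: "z \<in> V" and tV: "t \<in> V"
  shows "{w \<in> Wd V P. w \<noteq> [] \<and> hd (lets w) = t} =
         (\<lambda>w. Some t # None # Some z # w) ` R (V - {z, t}) (P - {{z, t}}) z"
proof (intro set_eqI iffI)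
  fix w assume "w \<in> {w \<in> Wd V P. w \<noteq> [] \<and> hd (lets w) = t}"
  then have ok: "okw w" and d: "distinct (lets w)" and sV: "set (lets w) = V" and bP: "box_nbrs w = P"
    and ne: "w \<noteq> []" and ht: "hd (lets w) = t" unfolding Wd_def by auto
  from okw_cons_cases[OF ok ne]
  show "w \<in> (\<lambda>w. Some t # None # Some z # w) ` R (V - {z, t}) (P - {{z, t}}) z"
  proof
    assume "\<exists>t w'. w = Some t # w' \<and> (w' = [] \<or> hd w' \<noteq> None)"
    then obtain t' w' where w: "w = Some t' # w'" and h: "w' = [] \<or> hd w' \<noteq> None" by blast
    have tt: "t' = t" using ht w by simp
    have "t \<notin> set (lets w')" using d w tt by auto
    then have "{z, t} \<notin> box_nbrs w'" using bn_sub[of "{z, t}" w'] by auto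
    then have False using bP bn_cons1[OF h] w zP by auto
    then show ?thesis ..
  next
    assume "\<exists>t z w'. w = Some t # None # Some z # w' \<and> (w' = [] \<or> hd w' \<noteq> None)"
    then obtain t' z' w' where w: "w = Some t' # None # Some z' # w'" and h: "w' = [] \<or> hd w' \<noteq> None" by blast
    have tt: "t' = t" using ht w by simp
    have dd: "t \<notin> set (lets w')" "z' \<notin> set (lets w')" "distinct (lets w')" "z' \<noteq> t" using d w tt by auto
    have nz: "{z, t} \<notin> box_nbrs w'" using bn_sub[of "{z, t}" w'] dd by auto
    have bw: "box_nbrs w = insert {t, z'} (box_nbrs w')" using bn_cons3[OF h] w tt by simp
    then have "{z, t} = {t, z'}" using zP bP nz by auto
    then have zz: "z' = z" using zt by (metis doubleton_eq_iff)
    have o: "okw w' \<and> (w' = [] \<or> z < hd (lets w'))" using ok okw_cons3[OF h] w zz by simp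
    have "w' \<in> R (V - {z, t}) (P - {{z, t}}) z" unfolding R_def Wd_def
      using o dd sV bP bw nz w tt zz by (auto simp: insert_commute)
    then show ?thesis using w tt zz by blast
  qed
next
  fix w assume "w \<in> (\<lambda>w. Some t # None # Some z # w) ` R (V - {z, t}) (P - {{z, t}}) z"
  then obtain w' where w: "w = Some t # None # Some z # w'" and ok: "okw w'" and d: "distinct (lets w')"
    and sV: "set (lets w') = V - {z, t}" and bP: "box_nbrs w' = P - {{z, t}}" and lk: "w' = [] \<or> z \<le> hd (lets w')"
    unfolding R_def Wd_def by auto
  have h: "w' = [] \<or> hd w' \<noteq> None" using okw_hd_ne[OF ok] .
  have "w' = [] \<or> z < hd (lets w')" using lk hd_lets_in[OF ok] sV by (metis Diff_iff insertI1 le_neq_implies_less)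
  then have "okw w" using okw_cons3[OF h] ok w by simp
  then show "w \<in> {w \<in> Wd V P. w \<noteq> [] \<and> hd (lets w) = t}"
    unfolding Wd_def using w d sV bP bn_cons3[OF h] tV zV zt zP by (auto simp: insert_commute)
qed


lemma Sp_sub_V: "(u, v) \<in> Sp V P t \<Longrightarrow> P \<subseteq> Pow V"
  unfolding Sp_def using bn_sub by fastforce

lemma Wd_sub_V: "w \<in> Wd V P \<Longrightarrow> P \<subseteq> Pow V"
  unfolding Wd_def using bn_sub by fastforce

lemma claim:
  "finite V \<Longrightarrow> (\<Sum>p\<in>Sp V P t. (-1::int) ^ length (fst p)) = int (card (R V P t))"
proof (induction "card V" arbitrary: V P t rule: less_induct)
  case less
  have fV: "finite V" by fact
  show ?case
  proof (induction t)
    case 0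
    have S: "Sp V P 0 = (\<lambda>v. ([], v)) ` Wd V P" unfolding Sp_def Wd_def by auto
    have Rr: "R V P 0 = Wd V P" unfolding R_def by auto
    have "(\<Sum>p\<in>Sp V P 0. (-1::int) ^ length (fst p)) = (\<Sum>v\<in>Wd V P. (-1::int) ^ length (fst ([] :: nat option list, v)))"
      unfolding S by (subst sum.reindex) (auto simp: inj_on_def)
    then show ?case using Rr by simp
  next
    case (Suc t)
    define E where "E = {p \<in> Sp V P (Suc t). fst p \<noteq> [] \<and> last (lets (fst p)) = t}"
    define F where "F = {w \<in> Wd V P. w \<noteq> [] \<and> hd (lets w) = t}"
    have S1: "Sp V P (Suc t) = Sp V P t \<union> E" unfolding E_def Sp_def by auto
    have S2: "Sp V P t \<inter> E = {}" unfolding E_def Sp_def by auto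
    have R1: "R V P t = R V P (Suc t) \<union> F" unfolding F_def R_def by auto
    have R2: "R V P (Suc t) \<inter> F = {}" unfolding F_def R_def by auto
    have finE: "finite E" unfolding E_def using finite_Sp[OF fV] by auto
    have finF: "finite F" unfolding F_def using finite_Wd[OF fV] by auto
    have key: "(\<Sum>p\<in>E. (-1::int) ^ length (fst p)) = - int (card F)"
    proof (cases "t \<in> V")
      case False
      have "E = {}"
      proof -
        { fix u v assume "(u, v) \<in> E"
          then have "u \<noteq> []" "okw u" "last (lets u) = t" "set (lets u) \<subseteq> V" unfolding E_def Sp_def by auto
          then have False using False wf_lets_nonempty by (metis last_in_set subsetD) }
        then show ?thesis by auto
      qed
      moreover have "F = {}"
      proof -
        { fix w assume "w \<in> F"
          then have "w \<noteq> []" "okw w" "hd (lets w) = t" "set (lets w) = V" unfolding F_def Wd_def by auto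
          then have False using False hd_lets_in by metis }
        then show ?thesis by auto
      qed
      ultimately show ?thesis by simp
    next
      case tV: True
      show ?thesis
      proof (cases "\<exists>z. z \<noteq> t \<and> {z, t} \<in> P")
        case False
        have Ee: "E = (\<lambda>(u, v). (u @ [Some t], v)) ` Sp (V - {t}) P t" unfolding E_def by (rule E_b[OF tV False])
        have Fe: "F = (\<lambda>w. Some t # w) ` R (V - {t}) P t" unfolding F_def by (rule F_b[OF tV False])
        have lt: "card (V - {t}) < card V" by (rule card_Diff1_less[OF fV tV])
        have IH: "(\<Sum>p\<in>Sp (V - {t}) P t. (-1::int) ^ length (fst p)) = int (card (R (V - {t}) P t))"
          using less.hyps[OF lt] fV by simp
        have inj1: "inj_on (\<lambda>(u, v). (u @ [Some t], v)) (Sp (V - {t}) P t)"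
          by (auto simp: inj_on_def)
        have "(\<Sum>p\<in>E. (-1::int) ^ length (fst p)) = (\<Sum>p\<in>Sp (V - {t}) P t. - ((-1::int) ^ length (fst p)))"
          unfolding Ee by (subst sum.reindex[OF inj1]) (auto intro!: sum.cong)
        also have "\<dots> = - int (card (R (V - {t}) P t))" using IH by (simp add: sum_negf)
        also have "card (R (V - {t}) P t) = card F" unfolding Fe by (rule card_image[symmetric]) (auto simp: inj_on_def)
        finally show ?thesis .
      next
        case True
        then obtain z where zt: "z \<noteq> t" and zP: "{z, t} \<in> P" by blast
        show ?thesis
        proof (cases "z \<in> V")
          case False
          have "E = {}" using Sp_sub_V zP False unfolding E_def by fastforce
          moreover have "F = {}" using Wd_sub_V zP False unfolding F_def by fastforce
          ultimately show ?thesis by simp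
        next
          case zV: True
          have Ee: "E = (\<lambda>(u, v). (u @ [Some z, None, Some t], v)) ` Sp (V - {z, t}) (P - {{z, t}}) z"
            unfolding E_def by (rule E_c[OF zt zP zV tV])
          have Fe: "F = (\<lambda>w. Some t # None # Some z # w) ` R (V - {z, t}) (P - {{z, t}}) z"
            unfolding F_def by (rule F_c[OF zt zP zV tV])
          have lt: "card (V - {z, t}) < card V"
          proof -
            have "card (V - {z, t}) \<le> card (V - {t})" by (rule card_mono) (use fV in auto)
            also have "\<dots> < card V" by (rule card_Diff1_less[OF fV tV])
            finally show ?thesis .
          qed
          have IH: "(\<Sum>p\<in>Sp (V - {z, t}) (P - {{z, t}}) z. (-1::int) ^ length (fst p)) = int (card (R (V - {z, t}) (P - {{z, t}}) z))"
            using less.hyps[OF lt] fV by simp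
          have inj1: "inj_on (\<lambda>(u, v). (u @ [Some z, None, Some t], v)) (Sp (V - {z, t}) (P - {{z, t}}) z)"
            by (auto simp: inj_on_def)
          have "(\<Sum>p\<in>E. (-1::int) ^ length (fst p)) = (\<Sum>p\<in>Sp (V - {z, t}) (P - {{z, t}}) z. - ((-1::int) ^ length (fst p)))"
            unfolding Ee by (subst sum.reindex[OF inj1]) (auto intro!: sum.cong)
          also have "\<dots> = - int (card (R (V - {z, t}) (P - {{z, t}}) z))" using IH by (simp add: sum_negf)
          also have "card (R (V - {z, t}) (P - {{z, t}}) z) = card F" unfolding Fe by (rule card_image[symmetric]) (auto simp: inj_on_def)
          finally show ?thesis .
        qed
      qed
    qed
    have "(\<Sum>p\<in>Sp V P (Suc t). (-1::int) ^ length (fst p)) = (\<Sum>p\<in>Sp V P t. (-1::int) ^ length (fst p)) + (\<Sum>p\<in>E. (-1::int) ^ length (fst p))"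
      unfolding S1 by (rule sum.union_disjoint) (use finite_Sp[OF fV] finE S2 in auto)
    also have "\<dots> = int (card (R V P t)) - int (card F)" using Suc key by simp
    also have "card (R V P t) = card (R V P (Suc t)) + card F"
      unfolding R1 by (rule card_Un_disjoint) (use finite_R[OF fV] finF R2 in auto)
    finally show ?case by simp
  qed
qed


lemma nat_cases3:
  obtains "j = 0" | "j = 1" | k where "j = Suc (Suc k)"
proof (cases j)
  case 0 then show ?thesis using that by simp
next
  case (Suc m) then show ?thesis using that by (cases m) auto
qed

lemma okw_idx1: "okw w \<Longrightarrow> Suc j < length w \<Longrightarrow> w ! j = None \<Longrightarrow> w ! Suc j \<noteq> None"
proof (induction w arbitrary: j rule: okw.induct)
  case (3 a b r)
  show ?case
  proof (cases j)
    case 0 then show ?thesis using 3 by simp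
  next
    case (Suc k) then show ?thesis using 3 by simp
  qed
next
  case (4 a b r)
  show ?case
  proof (cases j rule: nat_cases3)
    case 1 then show ?thesis using 4 by simp
  next
    case 2 then show ?thesis using 4 by simp
  next
    case (3 k) then show ?thesis using 4 by simp
  qed
qed auto

lemma okw_idx2: "okw w \<Longrightarrow> Suc (Suc j) < length w \<Longrightarrow> w ! j = None \<Longrightarrow> w ! Suc (Suc j) \<noteq> None"
proof (induction w arbitrary: j rule: okw.induct)
  case (3 a b r)
  show ?case
  proof (cases j)
    case 0 then show ?thesis using 3 by simp
  next
    case (Suc k) then show ?thesis using 3 by simp
  qed
next
  case (4 a b r)
  show ?case
  proof (cases j rule: nat_cases3)
    case 1 then show ?thesis using 4 by simp
  next
    case 2 then show ?thesis using 4 by (cases r) auto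
  next
    case (3 k) then show ?thesis using 4 by simp
  qed
qed auto

lemma okw_idx3: "okw w \<Longrightarrow> Suc j < length w \<Longrightarrow> w ! j = Some b \<Longrightarrow> w ! Suc j = Some c \<Longrightarrow> b < c"
proof (induction w arbitrary: j rule: okw.induct)
  case (3 a b' r)
  show ?case
  proof (cases j)
    case 0 then show ?thesis using 3 by simp
  next
    case (Suc k) then show ?thesis using 3 by simp
  qed
next
  case (4 a b' r)
  show ?case
  proof (cases j rule: nat_cases3)
    case 1 then show ?thesis using 4 by simp
  next
    case 2 then show ?thesis using 4 by simp
  next
    case (3 k) then show ?thesis using 4 by simp
  qed
qed auto

lemma drop_split3:
  assumes "i < length w" "2 \<le> i"
  shows "w = take (i - 2) w @ [w ! (i - 2), w ! (i - 1), w ! i] @ drop (Suc i) w"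
proof -
  have e1: "Suc (i - 2) = i - 1" "Suc (i - 1) = i" using assms by simp_all
  have "drop (i - 2) w = w ! (i - 2) # drop (Suc (i - 2)) w" using assms by (simp add: Cons_nth_drop_Suc)
  moreover have "drop (i - 1) w = w ! (i - 1) # drop (Suc (i - 1)) w"
    using Cons_nth_drop_Suc[of "i - 1" w] assms by simp
  moreover have "drop i w = w ! i # drop (Suc i) w" using assms by (simp add: Cons_nth_drop_Suc)
  ultimately have "drop (i - 2) w = [w ! (i - 2), w ! (i - 1), w ! i] @ drop (Suc i) w" using e1 by simp
  then show ?thesis by (metis append_take_drop_id)
qed

lemma pos_decomp:
  assumes ok: "okw w" and lo: "\<forall>c\<in>set (lets w). a1 \<le> c" and i: "i < length w" "w ! i = Some a1" "i \<noteq> 0"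
  shows "\<exists>u y v. w = u @ [Some y, None, Some a1] @ v \<and> length u = i - 2 \<and> 2 \<le> i \<and>
           (u = [] \<or> last u \<noteq> None) \<and> (v = [] \<or> hd v \<noteq> None)"
proof -
  note idx1 = okw_idx1[OF ok] and idx2 = okw_idx2[OF ok] and idx3 = okw_idx3[OF ok]
  have si: "Suc (i - 1) = i" using i by simp
  have m1: "w ! (i - 1) = None"
  proof (cases "w ! (i - 1)")
    case (Some b)
    then have "b < a1" using idx3[of "i - 1" b a1] si i by simp
    moreover have "Some b \<in> set w" using Some i by (metis less_imp_diff_less nth_mem)
    then have "b \<in> set (lets w)" unfolding set_lets by simp
    ultimately show ?thesis using lo by fastforce
  qed
  have "i - 1 \<noteq> 0"
  proof
    assume "i - 1 = 0"
    then have "w ! 0 = None" using m1 by simp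
    moreover have "w \<noteq> []" using i by auto
    then have "hd w \<noteq> None" using wf_hd[OF ok] by simp
    then have "w ! 0 \<noteq> None" using \<open>w \<noteq> []\<close> by (simp add: hd_conv_nth)
    ultimately show False by simp
  qed
  then have i2: "2 \<le> i" using i by simp
  have s2: "Suc (i - 2) = i - 1" using i2 by simp
  have m2: "w ! (i - 2) \<noteq> None"
  proof
    assume "w ! (i - 2) = None"
    then have "w ! Suc (i - 2) \<noteq> None" using idx1[of "i - 2"] s2 i by simp
    then show False using m1 s2 by simp
  qed
  then obtain y where y: "w ! (i - 2) = Some y" by auto
  define u where "u = take (i - 2) w"
  define v where "v = drop (Suc i) w"
  have w: "w = u @ [Some y, None, Some a1] @ v"
    unfolding u_def v_def using drop_split3[OF i(1) i2] y m1 i(2) by simp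
  have lu: "length u = i - 2" unfolding u_def using i by simp
  have c1: "u = [] \<or> last u \<noteq> None"
  proof (cases "u = []")
    case False
    then have "0 < length u" by simp
    then have p: "0 < i - 2" using lu by simp
    have l3: "length u - 1 = i - 3" using lu by simp
    have "last u = u ! (length u - 1)" using False by (simp add: last_conv_nth)
    also have "\<dots> = w ! (i - 3)" unfolding l3 unfolding u_def using p by (simp add: nth_take)
    finally have "last u = w ! (i - 3)" .
    moreover have "w ! (i - 3) \<noteq> None"
    proof
      assume "w ! (i - 3) = None"
      moreover have "Suc (Suc (i - 3)) = i - 1" using p by simp
      ultimately have "w ! (i - 1) \<noteq> None" using idx2[of "i - 3"] i by simp
      then show False using m1 by simp
    qed
    ultimately show ?thesis by simp
  qed simp
  have c2: "v = [] \<or> hd v \<noteq> None"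
  proof (cases "v = []")
    case False
    then have si2: "Suc i < length w" unfolding v_def by simp
    then have "hd v = w ! Suc i" unfolding v_def by (simp add: hd_drop_conv_nth)
    moreover have "w ! Suc i \<noteq> None"
      using idx2[of "i - 1"] m1 si si2 by simp
    ultimately show ?thesis by simp
  qed simp
  show ?thesis using w lu i2 c1 c2 by blast
qed



lemma BP_facts:
  assumes "finite A" "w \<in> BP A"
  shows "okw w" "distinct (lets w)" "set (lets w) = A"
  using assms BP_iff by blast+

lemma BP3_iff:
  assumes fA: "finite A"
  shows "w \<in> BP3 A \<longleftrightarrow> w \<in> BP A \<and> (\<exists>u y v. w = u @ [Some y, None, Some (Min A)] @ v \<and> even (length u) \<and>
           (u = [] \<or> last u \<noteq> None) \<and> (v = [] \<or> hd v \<noteq> None))"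
proof
  assume H: "w \<in> BP3 A"
  then have wB: "w \<in> BP A" unfolding BP3_def by simp
  obtain i where i: "i < length w" "w ! i = Some (Min A)" "odd (i + 1)" "i \<noteq> 0"
    using H unfolding BP3_def by blast
  have ok: "okw w" and sA: "set (lets w) = A" using BP_facts[OF fA wB] by simp_all
  have lo: "\<forall>c\<in>set (lets w). Min A \<le> c" using sA fA by simp
  obtain u y v where d: "w = u @ [Some y, None, Some (Min A)] @ v" "length u = i - 2" "2 \<le> i"
    "u = [] \<or> last u \<noteq> None" "v = [] \<or> hd v \<noteq> None"
    using pos_decomp[OF ok lo i(1,2,4)] by blast
  have "even (length u)" using d(2,3) i(3) by simp
  then show "w \<in> BP A \<and> (\<exists>u y v. w = u @ [Some y, None, Some (Min A)] @ v \<and> even (length u) \<and>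
           (u = [] \<or> last u \<noteq> None) \<and> (v = [] \<or> hd v \<noteq> None))" using wB d by blast
next
  assume H: "w \<in> BP A \<and> (\<exists>u y v. w = u @ [Some y, None, Some (Min A)] @ v \<and> even (length u) \<and>
           (u = [] \<or> last u \<noteq> None) \<and> (v = [] \<or> hd v \<noteq> None))"
  then obtain u y v where d: "w = u @ [Some y, None, Some (Min A)] @ v" "even (length u)" by blast
  have "length u + 2 < length w \<and> w ! (length u + 2) = Some (Min A) \<and> odd (length u + 2 + 1) \<and> length u + 2 \<noteq> 0"
    using d by (simp add: nth_append)
  then show "w \<in> BP3 A" using H unfolding BP3_def by blast
qed

lemma BP1_iff:
  assumes fA: "finite A"
  shows "w \<in> BP1 A \<longleftrightarrow> w \<in> BP A \<and> ((\<exists>u y v. w = u @ [Some y, None, Some (Min A)] @ v \<and> odd (length u) \<and>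
           (u = [] \<or> last u \<noteq> None) \<and> (v = [] \<or> hd v \<noteq> None)) \<or> (\<exists>y v. w = Some (Min A) # None # Some y # v))"
proof
  assume H: "w \<in> BP1 A"
  then have wB: "w \<in> BP A" unfolding BP1_def by simp
  have ok: "okw w" and sA: "set (lets w) = A" using BP_facts[OF fA wB] by simp_all
  have lo: "\<forall>c\<in>set (lets w). Min A \<le> c" using sA fA by simp
  have HH: "(\<exists>i<length w. w ! i = Some (Min A) \<and> even (i + 1)) \<or>
        (length w \<ge> 2 \<and> w ! 0 = Some (Min A) \<and> w ! 1 = None)" using H unfolding BP1_def by simp
  have cases: "(\<And>i. i < length w \<Longrightarrow> w ! i = Some (Min A) \<Longrightarrow> even (i + 1) \<Longrightarrow> P) \<Longrightarrow>
     (length w \<ge> 2 \<Longrightarrow> w ! 0 = Some (Min A) \<Longrightarrow> w ! 1 = None \<Longrightarrow> P) \<Longrightarrow> P" for P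
    using HH by (elim disjE exE conjE) auto
  show "w \<in> BP A \<and> ((\<exists>u y v. w = u @ [Some y, None, Some (Min A)] @ v \<and> odd (length u) \<and>
           (u = [] \<or> last u \<noteq> None) \<and> (v = [] \<or> hd v \<noteq> None)) \<or> (\<exists>y v. w = Some (Min A) # None # Some y # v))"
  proof (rule cases)
    fix i assume a: "i < length w" "w ! i = Some (Min A)" "even (i + 1)"
    from a(3) have "i \<noteq> 0" by (cases i) auto
    then obtain u y v where d: "w = u @ [Some y, None, Some (Min A)] @ v" "length u = i - 2" "2 \<le> i"
      "u = [] \<or> last u \<noteq> None" "v = [] \<or> hd v \<noteq> None"
      using pos_decomp[OF ok lo a(1,2)] by blast
    have "odd (length u)" using d(2,3) a(3) by simp
    then show ?thesis using wB d by blast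
  next
    assume b: "length w \<ge> 2" "w ! 0 = Some (Min A)" "w ! 1 = None"
    obtain c0 w' where w1: "w = c0 # w'" using b(1) by (cases w) auto
    obtain c1 r where w2: "w' = c1 # r" using b(1) w1 by (cases w') auto
    have r: "w = Some (Min A) # None # r" using b(2,3) w1 w2 by simp
    have "\<exists>y v. r = Some y # v"
    proof (cases r)
      case Nil then show ?thesis using ok r by simp
    next
      case (Cons d v)
      then show ?thesis using ok r by (cases d) auto
    qed
    then obtain y v where "r = Some y # v" by blast
    then show "w \<in> BP A \<and> ((\<exists>u y v. w = u @ [Some y, None, Some (Min A)] @ v \<and> odd (length u) \<and>
           (u = [] \<or> last u \<noteq> None) \<and> (v = [] \<or> hd v \<noteq> None)) \<or> (\<exists>y v. w = Some (Min A) # None # Some y # v))"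
      using wB r by blast
  qed
next
  assume H: "w \<in> BP A \<and> ((\<exists>u y v. w = u @ [Some y, None, Some (Min A)] @ v \<and> odd (length u) \<and>
           (u = [] \<or> last u \<noteq> None) \<and> (v = [] \<or> hd v \<noteq> None)) \<or> (\<exists>y v. w = Some (Min A) # None # Some y # v))"
  then have wB: "w \<in> BP A" by simp
  from H have "(\<exists>u y v. w = u @ [Some y, None, Some (Min A)] @ v \<and> odd (length u)) \<or> (\<exists>y v. w = Some (Min A) # None # Some y # v)"
    by blast
  then show "w \<in> BP1 A"
  proof
    assume "\<exists>u y v. w = u @ [Some y, None, Some (Min A)] @ v \<and> odd (length u)"
    then obtain u y v where d: "w = u @ [Some y, None, Some (Min A)] @ v" "odd (length u)" by blast
    have "length u + 2 < length w \<and> w ! (length u + 2) = Some (Min A) \<and> even (length u + 2 + 1)"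
      using d by (simp add: nth_append)
    then show ?thesis using wB unfolding BP1_def by blast
  next
    assume "\<exists>y v. w = Some (Min A) # None # Some y # v"
    then obtain y v where "w = Some (Min A) # None # Some y # v" by blast
    then show ?thesis using wB unfolding BP1_def by simp
  qed
qed


lemma G_img:
  assumes fA: "finite A" and a1A: "a1 \<in> A" and lo: "\<forall>c\<in>A. a1 \<le> c" and xA: "x \<in> A" and xa: "x \<noteq> a1" and xS: "{a1, x} \<in> S"
  shows "{w. w \<in> BP A \<and> box_nbrs w = S \<and> (\<exists>u y v. w = u @ [Some y, None, Some a1] @ v \<and> Q (length u) \<and>
            (u = [] \<or> last u \<noteq> None) \<and> (v = [] \<or> hd v \<noteq> None))}
       = (\<lambda>(u, v). u @ [Some x, None, Some a1] @ v) ` {p \<in> Sp (A - {a1, x}) (S - {{a1, x}}) x. Q (length (fst p))}"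
    (is "?L = ?R")
proof (intro set_eqI iffI)
  fix w assume "w \<in> ?L"
  then obtain u y v where wB: "w \<in> BP A" and bS: "box_nbrs w = S" and w: "w = u @ [Some y, None, Some a1] @ v"
    and Q: "Q (length u)" and lu: "u = [] \<or> last u \<noteq> None" and hv: "v = [] \<or> hd v \<noteq> None"
    by blast
  have ok: "okw w" and d: "distinct (lets w)" and sA: "set (lets w) = A" using BP_facts[OF fA wB] by simp_all
  define L where "L = u @ [Some y, None, Some a1]"
  have wL: "w = L @ v" unfolding L_def w by simp
  have lL: "L = [] \<or> last L \<noteq> None" unfolding L_def by simp
  have okL: "okw L" and okv: "okw v" using wf_append[OF lL hv] ok wL by simp_all
  have oku: "okw u" and lk: "u = [] \<or> last (lets u) < y" using okw_snoc3[OF lu] okL unfolding L_def by simp_all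
  have bw: "box_nbrs w = insert {y, a1} (box_nbrs u) \<union> box_nbrs v"
    using bn_append[OF lL hv] bn_snoc3[OF lu] wL unfolding L_def by simp
  have lw: "lets w = lets u @ [y, a1] @ lets v" unfolding w by simp
  have a1n: "a1 \<notin> set (lets u)" "a1 \<notin> set (lets v)" "y \<notin> set (lets u)" "y \<notin> set (lets v)" "y \<noteq> a1"
    using d lw by auto
  have n1: "{a1, x} \<notin> box_nbrs u" "{a1, x} \<notin> box_nbrs v" using bn_sub a1n by blast+
  then have "{a1, x} = {y, a1}" using xS bS bw by auto
  then have yx: "y = x" using xa by (metis doubleton_eq_iff)
  have "(u, v) \<in> Sp (A - {a1, x}) (S - {{a1, x}}) x"
  proof -
    have "distinct (lets u @ lets v)" using d lw by auto
    moreover have "set (lets u @ lets v) = A - {a1, x}" using sA lw a1n yx by auto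
    moreover have "box_nbrs u \<union> box_nbrs v = S - {{a1, x}}"
      using bS bw n1 yx by (auto simp: insert_commute)
    ultimately show ?thesis unfolding Sp_def using oku okv lk yx by auto
  qed
  then have "(u, v) \<in> {p \<in> Sp (A - {a1, x}) (S - {{a1, x}}) x. Q (length (fst p))}" using Q by simp
  moreover have "w = (\<lambda>(u, v). u @ [Some x, None, Some a1] @ v) (u, v)" using w yx by simp
  ultimately show "w \<in> ?R" by (rule rev_image_eqI)
next
  fix w assume "w \<in> ?R"
  then obtain p where pS: "p \<in> Sp (A - {a1, x}) (S - {{a1, x}}) x" and Qp: "Q (length (fst p))"
    and wp: "w = (\<lambda>(u, v). u @ [Some x, None, Some a1] @ v) p" by blast
  obtain u v where p: "p = (u, v)" by (cases p)
  have w: "w = u @ [Some x, None, Some a1] @ v" using wp p by simp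
  have Q: "Q (length u)" using Qp p by simp
  have oku: "okw u" and okv: "okw v" and d: "distinct (lets u @ lets v)"
    and sV: "set (lets u @ lets v) = A - {a1, x}" and bP: "box_nbrs u \<union> box_nbrs v = S - {{a1, x}}"
    and lk: "u = [] \<or> last (lets u) < x"
    using pS unfolding p Sp_def by simp_all
  have lu: "u = [] \<or> last u \<noteq> None" using okw_last_ne[OF oku] .
  have hv: "v = [] \<or> hd v \<noteq> None" using okw_hd_ne[OF okv] .
  define L where "L = u @ [Some x, None, Some a1]"
  have wL: "w = L @ v" unfolding L_def w by simp
  have lL: "L = [] \<or> last L \<noteq> None" unfolding L_def by simp
  have okL: "okw L" using okw_snoc3[OF lu] oku lk unfolding L_def by simp
  have "v = [] \<or> a1 < hd (lets v)"
  proof (cases "v = []")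
    case False
    then have "hd (lets v) \<in> set (lets v)" using hd_lets_in[OF okv] by simp
    then have "hd (lets v) \<in> A" "hd (lets v) \<noteq> a1" using sV by auto
    then show ?thesis using lo by force
  qed simp
  then have ok: "okw w" using wf_append[OF lL hv] okL okv wL unfolding L_def by simp
  have lw: "lets w = lets u @ [x, a1] @ lets v" unfolding w by simp
  have d2: "distinct (lets w)" using d sV lw xa by auto
  have s2: "set (lets w) = A" using sV lw xA a1A by auto
  have bw: "box_nbrs w = insert {x, a1} (box_nbrs u) \<union> box_nbrs v"
    using bn_append[OF lL hv] bn_snoc3[OF lu] wL unfolding L_def by simp
  have b2: "box_nbrs w = S" using bw bP xS by (auto simp: insert_commute)
  have wB: "w \<in> BP A" using BP_iff[OF fA] ok d2 s2 by blast
  show "w \<in> ?L" using wB b2 w Q lu hv by blast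
qed

lemma Spec_img:
  assumes fA: "finite A" and a1A: "a1 \<in> A" and lo: "\<forall>c\<in>A. a1 \<le> c" and xA: "x \<in> A" and xa: "x \<noteq> a1" and xS: "{a1, x} \<in> S"
  shows "{w. w \<in> BP A \<and> box_nbrs w = S \<and> (\<exists>y v. w = Some a1 # None # Some y # v)}
       = (\<lambda>v. Some a1 # None # Some x # v) ` R (A - {a1, x}) (S - {{a1, x}}) x"
    (is "?L = ?R")
proof (intro set_eqI iffI)
  fix w assume "w \<in> ?L"
  then obtain y v where wB: "w \<in> BP A" and bS: "box_nbrs w = S" and w: "w = Some a1 # None # Some y # v"
    by blast
  have ok: "okw w" and d: "distinct (lets w)" and sA: "set (lets w) = A" using BP_facts[OF fA wB] by simp_all
  have hv: "v = [] \<or> hd v \<noteq> None" using ok w by simp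
  have okv: "okw v" and lk: "v = [] \<or> y < hd (lets v)" using okw_cons3[OF hv] ok w by simp_all
  have bw: "box_nbrs w = insert {a1, y} (box_nbrs v)" using bn_cons3[OF hv] w by simp
  have a1n: "a1 \<notin> set (lets v)" "y \<notin> set (lets v)" "y \<noteq> a1" using d w by auto
  have n1: "{a1, x} \<notin> box_nbrs v" using bn_sub a1n by blast
  then have "{a1, x} = {a1, y}" using xS bS bw by auto
  then have yx: "y = x" using xa by (metis doubleton_eq_iff)
  have "v \<in> R (A - {a1, x}) (S - {{a1, x}}) x"
    unfolding R_def Wd_def using okv d sA bS bw n1 w yx lk a1n by auto
  then show "w \<in> ?R" using w yx by blast
next
  fix w assume "w \<in> ?R"
  then obtain v where w: "w = Some a1 # None # Some x # v" and vR: "v \<in> R (A - {a1, x}) (S - {{a1, x}}) x"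
    by blast
  have okv: "okw v" and d: "distinct (lets v)"
    and sV: "set (lets v) = A - {a1, x}" and bP: "box_nbrs v = S - {{a1, x}}" and lk: "v = [] \<or> x \<le> hd (lets v)"
    using vR unfolding R_def Wd_def by simp_all
  have hv: "v = [] \<or> hd v \<noteq> None" using okw_hd_ne[OF okv] .
  have "v = [] \<or> x < hd (lets v)"
  proof (cases "v = []")
    case False
    then have "hd (lets v) \<in> set (lets v)" using hd_lets_in[OF okv] by simp
    then have "hd (lets v) \<noteq> x" using sV by auto
    then show ?thesis using lk by auto
  qed simp
  then have ok: "okw w" using okw_cons3[OF hv] okv w by simp
  have d2: "distinct (lets w)" using d sV w xa by auto
  have s2: "set (lets w) = A" using sV w xA a1A by auto
  have b2: "box_nbrs w = S" using bn_cons3[OF hv] w bP xS by auto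
  have wB: "w \<in> BP A" using BP_iff[OF fA] ok d2 s2 by blast
  show "w \<in> ?L" using wB b2 w by blast
qed


lemma finite_BP: "finite A \<Longrightarrow> finite (BP A)"
  by (rule finite_subset[OF _ finite_Wall[of A]]) (auto simp: BP_iff intro: in_Wall)

lemma sum_sign_split:
  assumes "finite X"
  shows "(\<Sum>p\<in>X. (-1::int) ^ length (fst p)) =
         int (card {p \<in> X. even (length (fst p))}) - int (card {p \<in> X. odd (length (fst p))})"
proof -
  have X: "X = {p \<in> X. even (length (fst p))} \<union> {p \<in> X. odd (length (fst p))}" by auto
  have "(\<Sum>p\<in>X. (-1::int) ^ length (fst p)) =
        (\<Sum>p\<in>{p \<in> X. even (length (fst p))}. (-1::int) ^ length (fst p)) +
        (\<Sum>p\<in>{p \<in> X. odd (length (fst p))}. (-1::int) ^ length (fst p))"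
    by (subst X, rule sum.union_disjoint) (use assms in auto)
  also have "(\<Sum>p\<in>{p \<in> X. even (length (fst p))}. (-1::int) ^ length (fst p)) = (\<Sum>p\<in>{p \<in> X. even (length (fst p))}. 1)"
    by (rule sum.cong) auto
  also have "(\<Sum>p\<in>{p \<in> X. odd (length (fst p))}. (-1::int) ^ length (fst p)) = (\<Sum>p\<in>{p \<in> X. odd (length (fst p))}. -1)"
    by (rule sum.cong) auto
  finally show ?thesis by simp
qed

lemma inj_mid:
  assumes "x \<noteq> a1"
  shows "inj_on (\<lambda>(u, v). u @ [Some x, None, Some a1] @ v) {(u, v). a1 \<notin> set (lets u) \<and> a1 \<notin> set (lets v)}"
proof (rule inj_onI, clarify)
  fix u1 v1 u2 v2
  assume a: "a1 \<notin> set (lets u1)" "a1 \<notin> set (lets v1)" "a1 \<notin> set (lets u2)" "a1 \<notin> set (lets v2)"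
    and e: "u1 @ [Some x, None, Some a1] @ v1 = u2 @ [Some x, None, Some a1] @ v2"
  have e': "(u1 @ [Some x, None]) @ Some a1 # v1 = (u2 @ [Some x, None]) @ Some a1 # v2" using e by simp
  have n1: "Some a1 \<notin> set (u1 @ [Some x, None])" using a(1) assms unfolding set_lets by auto
  have n2: "Some a1 \<notin> set v1" using a(2) unfolding set_lets by auto
  have "u1 @ [Some x, None] = u2 @ [Some x, None] \<and> v1 = v2" using append_Cons_eq_iff[OF n1 n2] e' by blast
  then show "u1 = u2 \<and> v1 = v2" by simp
qed

lemma hd_not_a1:
  assumes "distinct (lets (u @ [Some y, None, Some a1] @ v))"
  shows "hd (u @ [Some y, None, Some a1] @ v) \<noteq> Some a1"
proof (cases u)
  case Nil then show ?thesis using assms by auto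
next
  case (Cons c u')
  show ?thesis
  proof
    assume "hd (u @ [Some y, None, Some a1] @ v) = Some a1"
    then have "c = Some a1" using Cons by simp
    then have "a1 \<in> set (lets u)" using Cons by simp
    then show False using assms by auto
  qed
qed

lemma pair_in:
  assumes "okw (u @ [Some y, None, Some a1] @ v)" "u = [] \<or> last u \<noteq> None" "v = [] \<or> hd v \<noteq> None"
  shows "{y, a1} \<in> box_nbrs (u @ [Some y, None, Some a1] @ v)"
proof -
  have l: "u @ [Some y, None, Some a1] = [] \<or> last (u @ [Some y, None, Some a1]) \<noteq> None" by simp
  have "box_nbrs ((u @ [Some y, None, Some a1]) @ v) = insert {y, a1} (box_nbrs u) \<union> box_nbrs v"
    using bn_append[OF l assms(3)] bn_snoc3[OF assms(2)] by simp
  then show ?thesis by simp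
qed

lemma fiber_card:
  assumes fA: "finite A"
  shows "card {w \<in> BP1 A. box_nbrs w = S} = card {w \<in> BP3 A. box_nbrs w = S}"
proof (cases "\<exists>x\<in>A. x \<noteq> Min A \<and> {Min A, x} \<in> S")
  case False
  have e3: "{w \<in> BP3 A. box_nbrs w = S} = {}"
  proof -
    { fix w assume w: "w \<in> BP3 A" "box_nbrs w = S"
      then obtain u y v where wB: "w \<in> BP A" and d: "w = u @ [Some y, None, Some (Min A)] @ v"
        "u = [] \<or> last u \<noteq> None" "v = [] \<or> hd v \<noteq> None" using BP3_iff[OF fA] by blast
      have ok: "okw w" and dd: "distinct (lets w)" and sA: "set (lets w) = A" using BP_facts[OF fA wB] by simp_all
      have "{y, Min A} \<in> S" using pair_in[of u y "Min A" v] d ok w(2) by simp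
      moreover have "y \<in> A" "y \<noteq> Min A" using sA dd d(1) by auto
      ultimately have False using False by (metis insert_commute) }
    then show ?thesis by blast
  qed
  have e1: "{w \<in> BP1 A. box_nbrs w = S} = {}"
  proof -
    { fix w assume w: "w \<in> BP1 A" "box_nbrs w = S"
      then have wB: "w \<in> BP A" and dis: "(\<exists>u y v. w = u @ [Some y, None, Some (Min A)] @ v \<and> odd (length u) \<and>
           (u = [] \<or> last u \<noteq> None) \<and> (v = [] \<or> hd v \<noteq> None)) \<or> (\<exists>y v. w = Some (Min A) # None # Some y # v)"
        using BP1_iff[OF fA] by blast+
      have ok: "okw w" and dd: "distinct (lets w)" and sA: "set (lets w) = A" using BP_facts[OF fA wB] by simp_all
      from dis have False
      proof
        assume "\<exists>u y v. w = u @ [Some y, None, Some (Min A)] @ v \<and> odd (length u) \<and>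
           (u = [] \<or> last u \<noteq> None) \<and> (v = [] \<or> hd v \<noteq> None)"
        then obtain u y v where d: "w = u @ [Some y, None, Some (Min A)] @ v"
          "u = [] \<or> last u \<noteq> None" "v = [] \<or> hd v \<noteq> None" by blast
        have "{y, Min A} \<in> S" using pair_in[of u y "Min A" v] d ok w(2) by simp
        moreover have "y \<in> A" "y \<noteq> Min A" using sA dd d(1) by auto
        ultimately show False using False by (metis insert_commute)
      next
        assume "\<exists>y v. w = Some (Min A) # None # Some y # v"
        then obtain y v where d: "w = Some (Min A) # None # Some y # v" by blast
        have hv: "v = [] \<or> hd v \<noteq> None" using ok d by simp
        have "{Min A, y} \<in> S" using bn_cons3[OF hv] d w(2) by blast
        moreover have "y \<in> A" "y \<noteq> Min A" using sA dd d by auto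
        ultimately show False using False by blast
      qed }
    then show ?thesis by blast
  qed
  show ?thesis by (simp only: e1 e3)
next
  case True
  then obtain x where xA: "x \<in> A" and xa: "x \<noteq> Min A" and xS: "{Min A, x} \<in> S" by blast
  define a1 where "a1 = Min A"
  have a1A: "a1 \<in> A" unfolding a1_def using fA xA by (metis Min_in empty_iff)
  have lo: "\<forall>c\<in>A. a1 \<le> c" unfolding a1_def using fA by simp
  have xa': "x \<noteq> a1" and xS': "{a1, x} \<in> S" using xa xS unfolding a1_def by simp_all
  define V0 where "V0 = A - {a1, x}"
  define P0 where "P0 = S - {{a1, x}}"
  define Gf where "Gf = (\<lambda>Q. {w. w \<in> BP A \<and> box_nbrs w = S \<and> (\<exists>u y v. w = u @ [Some y, None, Some a1] @ v \<and> Q (length u) \<and>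
            (u = [] \<or> last u \<noteq> None) \<and> (v = [] \<or> hd v \<noteq> None))})"
  define Sf where "Sf = {w. w \<in> BP A \<and> box_nbrs w = S \<and> (\<exists>y v. w = Some a1 # None # Some y # v)}"
  have F3: "{w \<in> BP3 A. box_nbrs w = S} = Gf even"
    unfolding Gf_def a1_def using BP3_iff[OF fA] by blast
  have F1: "{w \<in> BP1 A. box_nbrs w = S} = Gf odd \<union> Sf"
    unfolding Gf_def Sf_def a1_def using BP1_iff[OF fA] by blast
  have fV0: "finite V0" unfolding V0_def using fA by simp
  have mapped: "Gf Q = (\<lambda>(u, v). u @ [Some x, None, Some a1] @ v) ` {p \<in> Sp V0 P0 x. Q (length (fst p))}" for Q
    unfolding Gf_def V0_def P0_def by (rule G_img[OF fA a1A lo xA xa' xS'])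
  have sub: "{p \<in> Sp V0 P0 x. Q (length (fst p))} \<subseteq> {(u, v). a1 \<notin> set (lets u) \<and> a1 \<notin> set (lets v)}" for Q
    unfolding Sp_def V0_def by auto
  have cardG: "card (Gf Q) = card {p \<in> Sp V0 P0 x. Q (length (fst p))}" for Q
    unfolding mapped by (rule card_image, rule inj_on_subset[OF inj_mid[OF xa'] sub])
  have Sfe: "Sf = (\<lambda>v. Some a1 # None # Some x # v) ` R V0 P0 x"
    unfolding Sf_def V0_def P0_def by (rule Spec_img[OF fA a1A lo xA xa' xS'])
  have cardS: "card Sf = card (R V0 P0 x)" unfolding Sfe by (rule card_image) (auto simp: inj_on_def)
  have disj: "Gf odd \<inter> Sf = {}"
  proof -
    { fix w assume w: "w \<in> Gf odd" "w \<in> Sf"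
      then obtain u y v where wB: "w \<in> BP A" and d: "w = u @ [Some y, None, Some a1] @ v" unfolding Gf_def by blast
      obtain y' v' where d': "w = Some a1 # None # Some y' # v'" using w(2) unfolding Sf_def by blast
      have "distinct (lets w)" using BP_facts[OF fA wB] by simp
      then have "hd w \<noteq> Some a1" using hd_not_a1 d by simp
      then have False using d' by simp }
    then show ?thesis by blast
  qed
  have finG: "finite (Gf odd)" "finite Sf"
    using finite_subset[OF _ finite_BP[OF fA]] unfolding Gf_def Sf_def by auto
  have c1: "card {w \<in> BP1 A. box_nbrs w = S} = card (Gf odd) + card Sf"
    unfolding F1 by (rule card_Un_disjoint[OF finG disj])
  have cl: "(\<Sum>p\<in>Sp V0 P0 x. (-1::int) ^ length (fst p)) = int (card (R V0 P0 x))" by (rule claim[OF fV0])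
  have "(\<Sum>p\<in>Sp V0 P0 x. (-1::int) ^ length (fst p)) = int (card (Gf even)) - int (card (Gf odd))"
    unfolding cardG by (rule sum_sign_split[OF finite_Sp[OF fV0]])
  then have "int (card (Gf even)) = int (card (Gf odd)) + int (card Sf)" using cl cardS by simp
  then show ?thesis using c1 F3 by simp
qed

theorem lemma2p2:
  fixes A :: "nat set"
  assumes "finite A" and "\<forall>a\<in>A. 0 < a"
  shows "\<exists>\<phi>. bij_betw \<phi> (BP1 A) (BP3 A) \<and> (\<forall>w\<in>BP1 A. box_nbrs (\<phi> w) = box_nbrs w)"
proof -
  have fA: "finite A" by fact
  define F1 where "F1 = (\<lambda>S. {w \<in> BP1 A. box_nbrs w = S})"
  define F3 where "F3 = (\<lambda>S. {w \<in> BP3 A. box_nbrs w = S})"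
  have fin1: "finite (F1 S)" and fin3: "finite (F3 S)" for S
    unfolding F1_def F3_def BP1_def BP3_def using finite_BP[OF fA] by auto
  have "\<forall>S. \<exists>f. bij_betw f (F1 S) (F3 S)"
  proof
    fix S
    show "\<exists>f. bij_betw f (F1 S) (F3 S)"
      by (rule finite_same_card_bij[OF fin1 fin3]) (unfold F1_def F3_def, rule fiber_card[OF fA])
  qed
  from choice[OF this] obtain f where f0: "\<forall>S. bij_betw (f S) (F1 S) (F3 S)" by blast
  have f: "bij_betw (f S) (F1 S) (F3 S)" for S using f0 by blast
  define \<phi> where "\<phi> = (\<lambda>w. f (box_nbrs w) w)"
  have map: "\<phi> w \<in> BP3 A \<and> box_nbrs (\<phi> w) = box_nbrs w" if "w \<in> BP1 A" for w
  proof -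
    have "w \<in> F1 (box_nbrs w)" unfolding F1_def using that by simp
    then have "f (box_nbrs w) w \<in> F3 (box_nbrs w)" using f bij_betwE by blast
    then show ?thesis unfolding \<phi>_def F3_def by simp
  qed
  have inj: "inj_on \<phi> (BP1 A)"
  proof (rule inj_onI)
    fix w1 w2 assume w: "w1 \<in> BP1 A" "w2 \<in> BP1 A" "\<phi> w1 = \<phi> w2"
    have "box_nbrs w1 = box_nbrs (\<phi> w1)" using map[OF w(1)] by simp
    also have "\<dots> = box_nbrs (\<phi> w2)" using w(3) by simp
    also have "\<dots> = box_nbrs w2" using map[OF w(2)] by simp
    finally have eS: "box_nbrs w1 = box_nbrs w2" .
    have "w1 \<in> F1 (box_nbrs w1)" "w2 \<in> F1 (box_nbrs w1)" unfolding F1_def using w eS by auto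
    moreover have "f (box_nbrs w1) w1 = f (box_nbrs w1) w2" using w(3) eS unfolding \<phi>_def by simp
    ultimately show "w1 = w2" using f[of "box_nbrs w1"] unfolding bij_betw_def inj_on_def by blast
  qed
  have surj: "\<phi> ` BP1 A = BP3 A"
  proof
    show "\<phi> ` BP1 A \<subseteq> BP3 A"
    proof
      fix y assume "y \<in> \<phi> ` BP1 A"
      then obtain w where "w \<in> BP1 A" "y = \<phi> w" by (rule imageE)
      then show "y \<in> BP3 A" using map by simp
    qed
  next
    show "BP3 A \<subseteq> \<phi> ` BP1 A"
    proof
      fix w' assume w': "w' \<in> BP3 A"
      define S where "S = box_nbrs w'"
      have "w' \<in> F3 S" unfolding F3_def S_def using w' by simp
      moreover have "F3 S = f S ` F1 S" using f[of S] unfolding bij_betw_def by simp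
      ultimately have "w' \<in> f S ` F1 S" by simp
      then obtain w where w: "w \<in> F1 S" "f S w = w'" by (metis imageE)
      have "box_nbrs w = S" "w \<in> BP1 A" using w(1) unfolding F1_def by simp_all
      then have "\<phi> w = w'" unfolding \<phi>_def using w(2) by simp
      then show "w' \<in> \<phi> ` BP1 A" using \<open>w \<in> BP1 A\<close> by blast
    qed
  qed
  show ?thesis
    by (rule exI[of _ \<phi>]) (use inj surj map in \<open>auto simp: bij_betw_def\<close>)
qed

end
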